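(* Let $\{G(n)\}$ be a sequence of random intersection graphs with $\mathbb E\,Y(n)^2=O(1)$, and let $R(n)$ be the number of $4$-sets $S\subseteq V(G(n))$ that witness a rainbow $K_4$ in $G(n)$. Then $\mathbb E\,R(n)\le(\mathbb E\,Y(n)^2)^4/4!=O(1)$. Furthermore, if for some positive sequence $\varepsilon_n\to0$ we have $n\,\mathbb P(Y(n)\ge\varepsilon_n n^{1/2})\to0$, then with probability tending to $1$, $G(n)$ contains no rainbow $K_4$.
   Context: Random intersection graph: given positive integers $n,m$ and a probability measure $P$ on $\{0,\dots,m\}$, $G(n,m,P)$ has vertex set $V=[n]$ and attribute set $W=\{w_1,\dots,w_m\}$; independent random subsets $S_1,\dots,S_n\subseteq W$ with $\mathbb P(S_v=S)=P(|S|)/\binom{m}{|S|}$; distinct $u,v$ adjacent iff $S_u\cap S_v\ne\emptyset$. For a sequence $G(n)=G(n,m(n),P(n))$ with $m(n)\to\infty$, $X(n)$ has law $P(n)$ and $Y(n)=(n/m)^{1/2}X(n)$. A set $S\subseteq V$ witnesses a rainbow clique if $S$ induces a clique and one can assign to each pair $\{u,v\}\subseteq S$ an attribute in $S_u\cap S_v$ so that all assigned attributes are distinct; $G(n)$ contains a rainbow $K_4$ if some $4$-set is such a witness. *)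

theory Defs
  imports "HOL-Probability.Probability" "HOL-Library.Landau_Symbols"
begin

text \<open>Distribution of one attribute set S_v: first draw |S_v| = k according to P,
  then S_v uniform among k-subsets of W, so P(S_v = S) = P(|S|) / (m choose |S|).\<close>
definition attr_dist :: "nat \<Rightarrow> nat pmf \<Rightarrow> nat set pmf" where
  "attr_dist m P = bind_pmf P (\<lambda>k. pmf_of_set {S. S \<subseteq> {..<m} \<and> card S = k})"

definition RIG :: "nat \<Rightarrow> nat \<Rightarrow> nat pmf \<Rightarrow> (nat \<Rightarrow> nat set) pmf" where
  "RIG n m P = Pi_pmf {..<n} {} (\<lambda>_. attr_dist m P)"

definition rig_adj :: "(nat \<Rightarrow> nat set) \<Rightarrow> nat \<Rightarrow> nat \<Rightarrow> bool" where
  "rig_adj S u v \<longleftrightarrow> u \<noteq> v \<and> S u \<inter> S v \<noteq> {}"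

definition rainbow_witness :: "(nat \<Rightarrow> nat set) \<Rightarrow> nat set \<Rightarrow> bool" where
  "rainbow_witness S T \<longleftrightarrow>
     (\<forall>u\<in>T. \<forall>v\<in>T. u \<noteq> v \<longrightarrow> rig_adj S u v) \<and>
     (\<exists>f :: nat set \<Rightarrow> nat. inj_on f {e. e \<subseteq> T \<and> card e = 2} \<and>
        (\<forall>u\<in>T. \<forall>v\<in>T. u \<noteq> v \<longrightarrow> f {u, v} \<in> S u \<inter> S v))"

definition num_rainbow_K4 :: "nat \<Rightarrow> (nat \<Rightarrow> nat set) \<Rightarrow> nat" where
  "num_rainbow_K4 n S = card {T. T \<subseteq> {..<n} \<and> card T = 4 \<and> rainbow_witness S T}"

definition has_rainbow_K4 :: "nat \<Rightarrow> (nat \<Rightarrow> nat set) \<Rightarrow> bool" where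
  "has_rainbow_K4 n S \<longleftrightarrow> (\<exists>T. T \<subseteq> {..<n} \<and> card T = 4 \<and> rainbow_witness S T)"

text \<open>Y(n) = (n/m)^(1/2) X(n), as a function of the value k of X(n).\<close>
definition Yval :: "nat \<Rightarrow> nat \<Rightarrow> nat \<Rightarrow> real" where
  "Yval n m k = sqrt (real n / real m) * real k"

end

theory Submission
  imports Defs
begin

lemma binom_ratio:
  "j \<le> k \<Longrightarrow> k \<le> m \<Longrightarrow> real ((m - j) choose (k - j)) \<le> (real k / real m) ^ j * real (m choose k)"
proof (induction j arbitrary: m k)
  case 0 then show ?case by simp
next
  case (Suc j)
  then have k1: "k \<ge> 1" and m1: "m \<ge> 1" by auto
  have IH: "real ((m - 1 - j) choose (k - 1 - j)) \<le> (real (k-1) / real (m-1)) ^ j * real ((m-1) choose (k-1))"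
    using Suc.IH[of "k-1" "m-1"] Suc.prems by auto
  have le: "real (k-1) / real (m-1) \<le> real k / real m"
  proof (cases "m = 1")
    case True then show ?thesis by simp
  next
    case False
    then have "real m - 1 > 0" using m1 by simp
    moreover have "(real k - 1) * real m \<le> real k * (real m - 1)" using Suc.prems by (simp add: algebra_simps)
    ultimately show ?thesis using k1 m1 by (simp add: of_nat_diff field_simps)
  qed
  have abs: "real m * real ((m-1) choose (k-1)) = real k * real (m choose k)"
  proof -
    have "Suc (k-1) * (m choose Suc (k-1)) = m * ((m - 1) choose (k-1))"
      by (rule binomial_absorption)
    then show ?thesis using k1 by (metis Suc_pred' less_eq_Suc_le of_nat_mult One_nat_def Suc_le_eq)
  qed
  have "real ((m - Suc j) choose (k - Suc j)) = real ((m - 1 - j) choose (k - 1 - j))" by simp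
  also have "\<dots> \<le> (real (k-1) / real (m-1)) ^ j * real ((m-1) choose (k-1))" by (rule IH)
  also have "\<dots> \<le> (real k / real m) ^ j * real ((m-1) choose (k-1))"
    by (intro mult_right_mono power_mono le) auto
  also have "real ((m-1) choose (k-1)) = real k / real m * real (m choose k)"
    using abs m1 by (simp add: field_simps)
  finally show ?case by (simp add: mult_ac)
qed

definition U :: "nat \<Rightarrow> nat \<Rightarrow> nat set pmf" where
  "U m k = pmf_of_set {S. S \<subseteq> {..<m} \<and> card S = k}"

lemma Uset_fin: "finite {S. S \<subseteq> {..<(m::nat)} \<and> card S = k}"
  by (rule finite_subset[of _ "Pow {..<m}"]) (auto simp: finite_lessThan)

lemma Uset_card: "card {S. S \<subseteq> {..<(m::nat)} \<and> card S = k} = m choose k"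
  using n_subsets[of "{..<m}" k] by simp

lemma Uset_ne: "k \<le> (m::nat) \<Longrightarrow> {S. S \<subseteq> {..<m} \<and> card S = k} \<noteq> {}"
  using Uset_card[of m k] by (metis card.empty zero_less_binomial_iff not_less0 gr0I)

lemma set_U: "k \<le> (m::nat) \<Longrightarrow> set_pmf (U m k) = {S. S \<subseteq> {..<m} \<and> card S = k}"
  unfolding U_def using Uset_fin Uset_ne by simp

lemma prob_U_superset:
  assumes km: "k \<le> m" and A: "A \<subseteq> {..<m}" "card A = j"
  shows "measure_pmf.prob (U m k) {S. A \<subseteq> S} \<le> (real k / real m) ^ j"
proof -
  define F where "F = {S. S \<subseteq> {..<m} \<and> card S = k}"
  have finA: "finite A" using A finite_subset by blast
  have pr: "measure_pmf.prob (U m k) {S. A \<subseteq> S} = card (F \<inter> {S. A \<subseteq> S}) / card F"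
    unfolding U_def F_def using Uset_fin Uset_ne[OF km] by (simp add: measure_pmf_of_set)
  have cF: "card F = m choose k" unfolding F_def by (rule Uset_card)
  show ?thesis
  proof (cases "j \<le> k")
    case False
    have "F \<inter> {S. A \<subseteq> S} = {}"
    proof (rule ccontr)
      assume "F \<inter> {S. A \<subseteq> S} \<noteq> {}"
      then obtain S where "S \<in> F" "A \<subseteq> S" by auto
      then have "card A \<le> card S" unfolding F_def by (intro card_mono) (auto intro: finite_subset)
      then show False using False A \<open>S \<in> F\<close> unfolding F_def by auto
    qed
    then show ?thesis using pr by simp
  next
    case True
    have bij: "bij_betw (\<lambda>C. C \<union> A) {C. C \<subseteq> {..<m} - A \<and> card C = k - j} (F \<inter> {S. A \<subseteq> S})"
    proof (rule bij_betw_byWitness[where f' = "\<lambda>S. S - A"])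
      show "\<forall>a\<in>{C. C \<subseteq> {..<m} - A \<and> card C = k - j}. a \<union> A - A = a" by auto
      show "\<forall>a'\<in>F \<inter> {S. A \<subseteq> S}. a' - A \<union> A = a'" by auto
      show "(\<lambda>C. C \<union> A) ` {C. C \<subseteq> {..<m} - A \<and> card C = k - j} \<subseteq> F \<inter> {S. A \<subseteq> S}"
      proof safe
        fix C assume C: "C \<subseteq> {..<m} - A" "card C = k - j"
        have fC: "finite C" using C finite_subset by blast
        have "card (C \<union> A) = card C + card A"
          using C finA fC by (intro card_Un_disjoint) auto
        then show "C \<union> A \<in> F" unfolding F_def using C A True by auto
      qed
      show "(\<lambda>S. S - A) ` (F \<inter> {S. A \<subseteq> S}) \<subseteq> {C. C \<subseteq> {..<m} - A \<and> card C = k - j}"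
      proof safe
        fix S assume S: "S \<in> F" "A \<subseteq> S"
        have fS: "finite S" using S unfolding F_def by (auto intro: finite_subset)
        show "card (S - A) = k - j" using S A fS unfolding F_def by (simp add: card_Diff_subset finA)
      qed (use F_def in auto)
    qed
    have "card (F \<inter> {S. A \<subseteq> S}) = card {C. C \<subseteq> {..<m} - A \<and> card C = k - j}"
      using bij_betw_same_card[OF bij] by simp
    also have "\<dots> = (m - j) choose (k - j)"
      using n_subsets[of "{..<m} - A" "k - j"] A by (simp add: card_Diff_subset finA)
    finally have c: "card (F \<inter> {S. A \<subseteq> S}) = (m - j) choose (k - j)" .
    have pos: "real (m choose k) > 0" using km by simp
    show ?thesis unfolding pr c cF
      using binom_ratio[OF True km] pos by (simp add: divide_le_eq)
  qed
qed

lemma edge_cases: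
  assumes "e \<subseteq> T" "card e = 2"
  obtains u v where "u \<in> T" "v \<in> T" "u \<noteq> v" "e = {u, v}"
  using assms by (auto simp: card_2_iff)

lemma edge_at:
  assumes "e \<subseteq> T" "card e = 2" "v \<in> e"
  obtains u where "u \<in> T" "u \<noteq> v" "e = {v, u}"
  using assms by (auto simp: card_2_iff)

lemma card_Ev:
  assumes T: "finite T" "card T = 4" and v: "v \<in> T"
  shows "card {e. (e \<subseteq> T \<and> card e = 2) \<and> v \<in> e} = 3"
proof -
  have eq: "{e. (e \<subseteq> T \<and> card e = 2) \<and> v \<in> e} = (\<lambda>u. {v, u}) ` (T - {v})"
  proof safe
    fix e assume "e \<subseteq> T" "card e = 2" "v \<in> e"
    then obtain u where "u \<in> T" "u \<noteq> v" "e = {v, u}" by (rule edge_at)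
    then show "e \<in> (\<lambda>u. {v, u}) ` (T - {v})" by auto
  next
    fix u assume "u \<in> T" "u \<notin> {}" "u \<noteq> v"
    then show "card {v, u} = 2" by auto
  qed (use v in auto)

  have inj: "inj_on (\<lambda>u. {v, u}) (T - {v})"
    by (auto simp: inj_on_def doubleton_eq_iff)
  show ?thesis unfolding eq using card_image[OF inj] T v by simp
qed

lemma witness_bound:
  fixes K :: "nat \<Rightarrow> nat"
  assumes m1: "m \<ge> 1" and Km: "\<forall>v<n. K v \<le> m" and T: "T \<subseteq> {..<n}" "card T = 4"
  shows "measure_pmf.prob (Pi_pmf {..<n} {} (\<lambda>i. U m (K i))) {S. rainbow_witness S T}
           \<le> real m ^ 6 * (\<Prod>v\<in>T. (real (K v) / real m) ^ 3)"
proof -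
  define M where "M = Pi_pmf {..<n} {} (\<lambda>i. U m (K i))"
  define ET where "ET = {e. e \<subseteq> T \<and> card e = 2}"
  define Ev where "Ev = (\<lambda>v. {e \<in> ET. v \<in> e})"
  define G where "G = {g \<in> PiE ET (\<lambda>_. {..<m}). inj_on g ET}"
  define B where "B = (\<lambda>g::nat set \<Rightarrow> nat. {S::nat \<Rightarrow> nat set. \<forall>v\<in>T. g ` Ev v \<subseteq> S v})"
  define c where "c = (\<Prod>v\<in>T. (real (K v) / real m) ^ 3)"
  have finT: "finite T" using T finite_subset by blast
  have cET: "card ET = 6" unfolding ET_def using n_subsets[OF finT, of 2] T by (simp add: choose_two)
  have finET: "finite ET" unfolding ET_def proof (rule finite_subset[of _ "Pow T"])
    show "finite (Pow T)" using finT by simp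
  qed auto
  have cEv: "card (Ev v) = 3" if "v \<in> T" for v
    unfolding Ev_def ET_def using card_Ev[OF finT T(2) that] by simp
  have finG: "finite G" unfolding G_def proof (rule finite_subset[of _ "PiE ET (\<lambda>_. {..<m})"])
    show "finite (PiE ET (\<lambda>_. {..<m}))" using finET by (simp add: finite_PiE)
  qed auto
  have cG: "card G \<le> m ^ 6"
  proof -
    have "card G \<le> card (PiE ET (\<lambda>_. {..<m}))" unfolding G_def
      using finET by (intro card_mono finite_PiE) auto
    also have "\<dots> = m ^ 6" using finET cET by (simp add: card_PiE)
    finally show ?thesis .
  qed
  have setM: "set_pmf M = PiE_dflt {..<n} {} (set_pmf \<circ> (\<lambda>i. U m (K i)))"
    unfolding M_def by (rule set_Pi_pmf) simp
  have sub: "{S. rainbow_witness S T} \<inter> set_pmf M \<subseteq> (\<Union>g\<in>G. B g)"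
  proof safe
    fix S assume w: "rainbow_witness S T" and S: "S \<in> set_pmf M"
    have Ssub: "S v \<subseteq> {..<m}" if "v \<in> T" for v
    proof -
      have "v < n" using that T by auto
      then have "S v \<in> set_pmf (U m (K v))" using S setM by (auto simp: PiE_dflt_def)
      then show ?thesis using set_U[of "K v" m] Km \<open>v < n\<close> by auto
    qed
    from w obtain f where finj: "inj_on f ET" and fS: "\<forall>u\<in>T. \<forall>v\<in>T. u \<noteq> v \<longrightarrow> f {u, v} \<in> S u \<inter> S v"
      unfolding rainbow_witness_def ET_def by blast
    define g where "g = restrict f ET"
    have "g \<in> G"
    proof -
      have "g \<in> PiE ET (\<lambda>_. {..<m})"
      proof -
        have "f e \<in> {..<m}" if "e \<in> ET" for e
        proof -
          from that have "e \<subseteq> T" "card e = 2" unfolding ET_def by auto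
          then obtain u v where uv: "u \<in> T" "v \<in> T" "u \<noteq> v" "e = {u, v}"
            by (rule edge_cases)
          then show ?thesis using fS Ssub by blast
        qed
        then show ?thesis unfolding g_def by auto
      qed
      moreover have "inj_on g ET" unfolding g_def using finj by (simp add: inj_on_def)
      ultimately show ?thesis unfolding G_def by simp
    qed
    moreover have "S \<in> B g" unfolding B_def
    proof safe
      fix v e assume v: "v \<in> T" and e: "e \<in> Ev v"
      then have "e \<subseteq> T" "card e = 2" "v \<in> e" unfolding Ev_def ET_def by auto
      then obtain u where "u \<in> T" "u \<noteq> v" "e = {v, u}" by (rule edge_at)
      then show "g e \<in> S v" using fS v e unfolding g_def Ev_def by auto
    qed
    ultimately show "S \<in> (\<Union>g\<in>G. B g)" by blast
  qed
  have PB: "measure_pmf.prob M (B g) \<le> c" if g: "g \<in> G" for g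
  proof -
    define A where "A = (\<lambda>v. if v \<in> T then {X. g ` Ev v \<subseteq> X} else UNIV)"
    have "B g = Pi {..<n} A" unfolding B_def A_def using T by (auto simp: Pi_def)
    then have "measure_pmf.prob M (B g) = (\<Prod>v\<in>{..<n}. measure_pmf.prob (U m (K v)) (A v))"
      unfolding M_def by (simp add: measure_Pi_pmf_Pi)
    also have "\<dots> = (\<Prod>v\<in>T. measure_pmf.prob (U m (K v)) {X. g ` Ev v \<subseteq> X})"
      unfolding A_def using T
      by (subst prod.mono_neutral_cong_left[of "{..<n}" T]) auto
    also have "\<dots> \<le> c" unfolding c_def
    proof (rule prod_mono, safe)
      fix v assume v: "v \<in> T"
      have gE: "g ` Ev v \<subseteq> {..<m}" using g unfolding G_def Ev_def by auto
      have "inj_on g (Ev v)" using g unfolding G_def Ev_def by (auto intro: inj_on_subset)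
      then have "card (g ` Ev v) = 3" using cEv[OF v] by (simp add: card_image)
      then show "measure_pmf.prob (U m (K v)) {X. g ` Ev v \<subseteq> X} \<le> (real (K v) / real m) ^ 3"
        using prob_U_superset[OF _ gE] Km v T by auto
    qed auto
    finally show ?thesis .
  qed
  have "measure_pmf.prob M {S. rainbow_witness S T} = measure_pmf.prob M ({S. rainbow_witness S T} \<inter> set_pmf M)"
    by (rule measure_Int_set_pmf[symmetric])
  also have "\<dots> \<le> measure_pmf.prob M (\<Union>g\<in>G. B g)"
    by (rule measure_pmf.finite_measure_mono[OF sub]) simp
  also have "\<dots> \<le> (\<Sum>g\<in>G. measure_pmf.prob M (B g))"
    by (rule measure_pmf.finite_measure_subadditive_finite[OF finG]) simp
  also have "\<dots> \<le> (\<Sum>g\<in>G. c)" by (intro sum_mono PB)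
  also have "\<dots> = real (card G) * c" by simp
  also have "\<dots> \<le> real m ^ 6 * c"
  proof (rule mult_right_mono)
    show "real (card G) \<le> real m ^ 6" using cG of_nat_le_iff[of "card G" "m^6"] by simp
    show "0 \<le> c" unfolding c_def by (intro prod_nonneg) auto
  qed
  finally show ?thesis unfolding M_def c_def .
qed

lemma arith1:
  fixes p x q :: real
  assumes "0 \<le> p" "0 \<le> x" "x^2 = p^3" "q \<le> 1" "q \<le> x"
  shows "q \<le> p"
proof (cases "p \<ge> 1")
  case True then show ?thesis using assms by linarith
next
  case False
  have "p^3 \<le> p^2" using False assms(1) by (intro power_decreasing) auto
  then have "x^2 \<le> p^2" using assms(3) by simp
  then have "x \<le> p" using assms(1) power2_le_imp_le by blast
  then show ?thesis using assms by linarith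
qed

lemma arith2:
  fixes p x q c :: real
  assumes "0 \<le> p" "0 \<le> x" "x^2 = p^3" "p \<le> c^2" "0 \<le> c" "q \<le> x"
  shows "q \<le> c * p"
proof -
  have "x^2 = p^2 * p" using assms(3) by (simp add: power3_eq_cube power2_eq_square)
  also have "\<dots> \<le> p^2 * c^2" using assms(1,4) by (intro mult_left_mono) auto
  also have "\<dots> = (c * p)^2" by (simp add: power_mult_distrib)
  finally have "x^2 \<le> (c * p)^2" .
  then have "x \<le> c * p" using assms(1,5) power2_le_imp_le[of x "c*p"] by simp
  then show ?thesis using assms by linarith
qed

lemma x_sq:
  fixes K :: "nat \<Rightarrow> nat"
  assumes m1: "m \<ge> 1" and T: "finite T" "card T = 4"
  shows "(real m ^ 6 * (\<Prod>v\<in>T. (real (K v) / real m) ^ 3))^2 = (\<Prod>v\<in>T. real (K v)^2 / real m)^3"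
proof -
  have "(real m ^ 6 * (\<Prod>v\<in>T. (real (K v) / real m) ^ 3))^2
      = real m ^ 12 * (\<Prod>v\<in>T. (real (K v) / real m) ^ 6)"
    by (simp add: power_mult_distrib prod_power_distrib power_mult[symmetric])
  also have "real m ^ 12 = (\<Prod>v\<in>T. real m ^ 3)" using T by (simp add: power_mult[symmetric])
  also have "(\<Prod>v\<in>T. real m ^ 3) * (\<Prod>v\<in>T. (real (K v) / real m) ^ 6) = (\<Prod>v\<in>T. real m ^ 3 * (real (K v) / real m) ^ 6)"
    by (simp add: prod.distrib)
  also have "\<dots> = (\<Prod>v\<in>T. (real (K v)^2 / real m)^3)"
    using m1 by (intro prod.cong refl) (simp add: field_simps power_mult[symmetric] power_divide)
  also have "\<dots> = (\<Prod>v\<in>T. real (K v)^2 / real m)^3" by (simp add: prod_power_distrib)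
  finally show ?thesis .
qed

lemma witness_bound2:
  fixes K :: "nat \<Rightarrow> nat"
  assumes m1: "m \<ge> 1" and Km: "\<forall>v<n. K v \<le> m" and T: "T \<subseteq> {..<n}" "card T = 4"
  shows "measure_pmf.prob (Pi_pmf {..<n} {} (\<lambda>i. U m (K i))) {S. rainbow_witness S T}
           \<le> (\<Prod>v\<in>T. real (K v)^2 / real m)"
    and "c \<ge> 0 \<Longrightarrow> (\<forall>v\<in>T. real (K v)^2 / real m \<le> c^2) \<Longrightarrow>
         measure_pmf.prob (Pi_pmf {..<n} {} (\<lambda>i. U m (K i))) {S. rainbow_witness S T}
           \<le> c^4 * (\<Prod>v\<in>T. real (K v)^2 / real m)"
proof -
  have finT: "finite T" using T finite_subset by blast
  define q where "q = measure_pmf.prob (Pi_pmf {..<n} {} (\<lambda>i. U m (K i))) {S. rainbow_witness S T}"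
  define x where "x = real m ^ 6 * (\<Prod>v\<in>T. (real (K v) / real m) ^ 3)"
  define p where "p = (\<Prod>v\<in>T. real (K v)^2 / real m)"
  have qx: "q \<le> x" unfolding q_def x_def by (rule witness_bound[OF m1 Km T])
  have q1: "q \<le> 1" unfolding q_def by simp
  have x0: "0 \<le> x" unfolding x_def by (intro mult_nonneg_nonneg prod_nonneg) auto
  have p0: "0 \<le> p" unfolding p_def by (intro prod_nonneg) auto
  have xp: "x^2 = p^3" unfolding x_def p_def by (rule x_sq[OF m1 finT T(2)])
  show "q \<le> p" by (rule arith1[OF p0 x0 xp q1 qx])
  assume c: "c \<ge> 0" "\<forall>v\<in>T. real (K v)^2 / real m \<le> c^2"
  have "p \<le> (\<Prod>v\<in>T. c^2)" unfolding p_def using c by (intro prod_mono) auto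
  also have "\<dots> = (c^4)^2" using T finT by (simp add: power_mult[symmetric])
  finally have "p \<le> (c^4)^2" .
  then show "q \<le> c^4 * p" using arith2[OF p0 x0 xp _ _ qx] c by simp
qed

lemma RIG_bind: "RIG n m P = bind_pmf (Pi_pmf {..<n} 0 (\<lambda>_. P)) (\<lambda>K. Pi_pmf {..<n} {} (\<lambda>i. U m (K i)))"
proof -
  have "attr_dist m P = bind_pmf P (U m)" unfolding attr_dist_def U_def by simp
  then show ?thesis unfolding RIG_def by (simp add: Pi_pmf_bind[where d'=0])
qed

lemma fin_Q: "finite (set_pmf P) \<Longrightarrow> finite (set_pmf (Pi_pmf {..<(n::nat)} d (\<lambda>_. P)))"
  by (subst set_Pi_pmf) (auto intro!: finite_PiE_dflt)

lemma prob_bind_fin: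
  assumes fin: "finite (set_pmf Q)"
  shows "measure_pmf.prob (bind_pmf Q N) X = measure_pmf.expectation Q (\<lambda>K. measure_pmf.prob (N K) X)"
proof -
  have "ennreal (measure_pmf.prob (bind_pmf Q N) X) = emeasure (measure_pmf (bind_pmf Q N)) X"
    by (simp add: measure_pmf.emeasure_eq_measure)
  also have "\<dots> = (\<integral>\<^sup>+K. emeasure (measure_pmf (N K)) X \<partial>measure_pmf Q)" by simp
  also have "\<dots> = (\<integral>\<^sup>+K. ennreal (measure_pmf.prob (N K) X) \<partial>measure_pmf Q)"
    by (simp add: measure_pmf.emeasure_eq_measure)
  also have "\<dots> = ennreal (measure_pmf.expectation Q (\<lambda>K. measure_pmf.prob (N K) X))"
    by (rule nn_integral_eq_integral) (auto intro: integrable_measure_pmf_finite fin)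
  finally show ?thesis
    by (subst (asm) ennreal_inj) (auto intro: Bochner_Integration.integral_nonneg_AE)
qed

lemma Yval_sq: "(Yval n m k)^2 = real n * (real k ^ 2 / real m)"
  unfolding Yval_def by (simp add: power_mult_distrib)

lemma Yval_small:
  assumes e: "e > 0" and n: "n \<ge> 1" and m: "m \<ge> 1" and lt: "\<not> (e * sqrt (real n) \<le> Yval n m k)"
  shows "real k ^ 2 / real m \<le> e^2"
proof -
  have "Yval n m k = sqrt (real n) * (real k / sqrt (real m))"
    unfolding Yval_def by (simp add: real_sqrt_divide)
  with lt have "sqrt (real n) * (real k / sqrt (real m)) < sqrt (real n) * e" by (simp add: mult.commute)
  then have "real k / sqrt (real m) < e" by (rule mult_left_less_imp_less) simp
  then have "(real k / sqrt (real m))^2 \<le> e^2"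
    by (intro power_mono) auto
  then show ?thesis using m by (simp add: power_divide)
qed

lemma exp_sum_ind:
  fixes A :: "'i \<Rightarrow> 'a set"
  shows "measure_pmf.expectation M (\<lambda>x. \<Sum>i\<in>I. indicator (A i) x :: real) = (\<Sum>i\<in>I. measure_pmf.prob M (A i))"
proof -
  have "integrable (measure_pmf M) (indicator (A i) :: 'a \<Rightarrow> real)" for i
    by (intro integrable_real_indicator) (auto simp: measure_pmf.emeasure_eq_measure)
  then show ?thesis by (subst Bochner_Integration.integral_sum) auto
qed

lemma bounds:
  fixes n mm :: nat and PP :: "nat pmf"
  assumes m1: "mm \<ge> 1" and supp: "set_pmf PP \<subseteq> {0..mm}"
  defines "EY \<equiv> measure_pmf.expectation PP (\<lambda>k. (Yval n mm k)\<^sup>2)"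
  shows "measure_pmf.expectation (RIG n mm PP) (\<lambda>S. real (num_rainbow_K4 n S)) \<le> EY ^ 4 / fact 4"
    and "e > 0 \<Longrightarrow> measure_pmf.prob (RIG n mm PP) {S. has_rainbow_K4 n S}
           \<le> real n * measure_pmf.prob PP {k. Yval n mm k \<ge> e * sqrt (real n)} + e^4 * (EY ^ 4 / fact 4)"
proof -
  define a where "a = (\<lambda>k::nat. real k ^ 2 / real mm)"
  define Q where "Q = Pi_pmf {..<n} 0 (\<lambda>_. PP)"
  define N where "N = (\<lambda>K. Pi_pmf {..<n} {} (\<lambda>i. U mm (K i)))"
  define TT where "TT = {T. T \<subseteq> {..<n} \<and> card T = 4}"
  define Ea where "Ea = measure_pmf.expectation PP a"
  have RIG: "RIG n mm PP = bind_pmf Q N" unfolding Q_def N_def by (rule RIG_bind)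
  have finPP: "finite (set_pmf PP)" using supp finite_subset by blast
  have finQ: "finite (set_pmf Q)" unfolding Q_def by (rule fin_Q[OF finPP])
  have intQ: "integrable (measure_pmf Q) f" for f :: "_ \<Rightarrow> real"
    by (rule integrable_measure_pmf_finite[OF finQ])
  have intPP: "integrable (measure_pmf PP) f" for f :: "_ \<Rightarrow> real"
    by (rule integrable_measure_pmf_finite[OF finPP])
  have KQ: "\<forall>v<n. K v \<le> mm" if "K \<in> set_pmf Q" for K
    using that supp unfolding Q_def by (subst (asm) set_Pi_pmf) (auto simp: PiE_dflt_def)
  have finTT: "finite TT" unfolding TT_def
  proof (rule finite_subset[of _ "Pow {..<n}"])
    show "finite (Pow {..<n})" by simp
  qed auto
  have cTT: "card TT = n choose 4" unfolding TT_def using n_subsets[of "{..<n}" 4] by simp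
  have EYeq: "EY = real n * Ea"
    unfolding EY_def Ea_def a_def Yval_sq by simp
  have Ea0: "Ea \<ge> 0" unfolding Ea_def a_def by (intro Bochner_Integration.integral_nonneg_AE) auto
  have ET: "measure_pmf.expectation Q (\<lambda>K. \<Prod>v\<in>T. a (K v)) = Ea ^ 4" if T: "T \<in> TT" for T
  proof -
    have Tsub: "T \<subseteq> {..<n}" and cT: "card T = 4" using T unfolding TT_def by auto
    have fil: "{v \<in> {..<n}. v \<in> T} = T" using Tsub by auto
    have "(\<lambda>K. \<Prod>v\<in>T. a (K v)) = (\<lambda>K. \<Prod>v\<in>{..<n}. (if v \<in> T then a else (\<lambda>_. 1)) (K v))"
    proof (rule ext)
      fix K :: "nat \<Rightarrow> nat"
      have "(\<Prod>v\<in>{..<n}. (if v \<in> T then a else (\<lambda>_. 1)) (K v)) = (\<Prod>v\<in>{..<n}. if v \<in> T then a (K v) else 1)"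
        by (intro prod.cong) auto
      also have "\<dots> = (\<Prod>v\<in>{v \<in> {..<n}. v \<in> T}. a (K v))"
        by (rule prod.inter_filter[symmetric]) simp
      also have "\<dots> = (\<Prod>v\<in>T. a (K v))" by (simp only: fil)
      finally show "(\<Prod>v\<in>T. a (K v)) = (\<Prod>v\<in>{..<n}. (if v \<in> T then a else (\<lambda>_. 1)) (K v))"
        by (rule sym)
    qed
    then have "measure_pmf.expectation Q (\<lambda>K. \<Prod>v\<in>T. a (K v))
        = (\<Prod>v\<in>{..<n}. measure_pmf.expectation PP (if v \<in> T then a else (\<lambda>_. 1)))"
      unfolding Q_def
      by (simp only:) (rule expectation_prod_Pi_pmf, auto intro: intPP simp: a_def)
    also have "\<dots> = (\<Prod>v\<in>{..<n}. if v \<in> T then Ea else 1)"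
      unfolding Ea_def by (intro prod.cong) auto
    also have "\<dots> = (\<Prod>v\<in>T. Ea)"
      using Tsub by (intro prod.mono_neutral_cong_right) auto
    also have "\<dots> = Ea ^ 4" using cT by simp
    finally show ?thesis .
  qed
  have sumE: "(\<Sum>T\<in>TT. Ea ^ 4) \<le> EY ^ 4 / fact 4"
  proof -
    have "(\<Sum>T\<in>TT. Ea ^ 4) = real (n choose 4) * Ea ^ 4" using cTT by simp
    also have "\<dots> \<le> (real n ^ 4 / fact 4) * Ea ^ 4"
    proof (rule mult_right_mono)
      have "real ((n choose 4) * fact 4) \<le> real (n ^ 4)"
        using binomial_fact_pow[of n 4] by (metis of_nat_le_iff)
      then show "real (n choose 4) \<le> real n ^ 4 / fact 4"
        by (simp add: field_simps)
    qed (use Ea0 in simp)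
    also have "\<dots> = EY ^ 4 / fact 4" unfolding EYeq by (simp add: power_mult_distrib)
    finally show ?thesis .
  qed
  have pw: "measure_pmf.prob (N K) {S. rainbow_witness S T} \<le> (\<Prod>v\<in>T. a (K v))"
    if "K \<in> set_pmf Q" "T \<in> TT" for K T
    unfolding N_def a_def using witness_bound2(1)[OF m1 KQ[OF that(1)]] that(2) unfolding TT_def by auto
  have PT: "measure_pmf.prob (RIG n mm PP) {S. rainbow_witness S T} \<le> Ea ^ 4" if T: "T \<in> TT" for T
  proof -
    have "measure_pmf.prob (RIG n mm PP) {S. rainbow_witness S T}
        = measure_pmf.expectation Q (\<lambda>K. measure_pmf.prob (N K) {S. rainbow_witness S T})"
      unfolding RIG by (rule prob_bind_fin[OF finQ])
    also have "\<dots> \<le> measure_pmf.expectation Q (\<lambda>K. \<Prod>v\<in>T. a (K v))"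
      by (rule integral_mono_AE[OF intQ intQ]) (auto intro!: AE_pmfI pw T)
    also have "\<dots> = Ea ^ 4" by (rule ET[OF T])
    finally show ?thesis .
  qed
  show "measure_pmf.expectation (RIG n mm PP) (\<lambda>S. real (num_rainbow_K4 n S)) \<le> EY ^ 4 / fact 4"
  proof -
    have num: "real (num_rainbow_K4 n S) = (\<Sum>T\<in>TT. indicator {S. rainbow_witness S T} S)" for S
    proof -
      have "num_rainbow_K4 n S = card {T \<in> TT. rainbow_witness S T}"
        unfolding num_rainbow_K4_def TT_def by (rule arg_cong[where f=card]) auto
      also have "real \<dots> = (\<Sum>T\<in>{T \<in> TT. rainbow_witness S T}. 1)" by simp
      also have "\<dots> = (\<Sum>T\<in>TT. if rainbow_witness S T then 1 else 0)"
        using finTT by (rule sum.inter_filter)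
      also have "\<dots> = (\<Sum>T\<in>TT. indicator {S. rainbow_witness S T} S)"
        by (intro sum.cong) (auto simp: indicator_def)
      finally show ?thesis .
    qed
    have "measure_pmf.expectation (RIG n mm PP) (\<lambda>S. real (num_rainbow_K4 n S))
        = measure_pmf.expectation (RIG n mm PP) (\<lambda>S. \<Sum>T\<in>TT. indicator {S. rainbow_witness S T} S)"
      by (simp only: num)
    also have "\<dots> = (\<Sum>T\<in>TT. measure_pmf.prob (RIG n mm PP) {S. rainbow_witness S T})"
      by (rule exp_sum_ind)
    also have "\<dots> \<le> (\<Sum>T\<in>TT. Ea ^ 4)" by (intro sum_mono PT)
    also have "\<dots> \<le> EY ^ 4 / fact 4" by (rule sumE)
    finally show ?thesis .
  qed
  assume e: "e > 0"
  define B where "B = {k. Yval n mm k \<ge> e * sqrt (real n)}"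
  define bad where "bad = {K::nat\<Rightarrow>nat. \<exists>v<n. K v \<in> B}"
  have hasU: "{S. has_rainbow_K4 n S} = (\<Union>T\<in>TT. {S. rainbow_witness S T})"
    unfolding has_rainbow_K4_def TT_def by auto
  have pw2: "measure_pmf.prob (N K) {S. has_rainbow_K4 n S}
      \<le> indicator bad K + e^4 * (\<Sum>T\<in>TT. \<Prod>v\<in>T. a (K v))" if K: "K \<in> set_pmf Q" for K
  proof (cases "K \<in> bad")
    case True
    have "0 \<le> e^4 * (\<Sum>T\<in>TT. \<Prod>v\<in>T. a (K v))"
      using e by (intro mult_nonneg_nonneg sum_nonneg prod_nonneg) (auto simp: a_def)
    moreover have "measure_pmf.prob (N K) {S. has_rainbow_K4 n S} \<le> 1" by (rule measure_pmf.prob_le_1)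
    moreover have "indicator bad K = (1::real)" using True by simp
    ultimately show ?thesis by linarith
  next
    case False
    have bnd: "measure_pmf.prob (N K) {S. rainbow_witness S T} \<le> e^4 * (\<Prod>v\<in>T. a (K v))"
      if T: "T \<in> TT" for T
    proof -
      have Tsub: "T \<subseteq> {..<n}" and cT: "card T = 4" using T unfolding TT_def by auto
      have small: "\<forall>v\<in>T. real (K v)^2 / real mm \<le> e^2"
      proof
        fix v assume v: "v \<in> T"
        then have vn: "v < n" using Tsub by auto
        then have n1: "n \<ge> 1" by simp
        have "K v \<notin> B" using False vn unfolding bad_def by auto
        then show "real (K v)^2 / real mm \<le> e^2"
          using Yval_small[OF e n1 m1] unfolding B_def by auto
      qed
      show ?thesis unfolding N_def a_def
        using witness_bound2(2)[OF m1 KQ[OF K] Tsub cT, of e] e small by simp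
    qed
    have "measure_pmf.prob (N K) {S. has_rainbow_K4 n S}
        = measure_pmf.prob (N K) (\<Union>T\<in>TT. {S. rainbow_witness S T})" by (simp only: hasU)
    also have "\<dots> \<le> (\<Sum>T\<in>TT. measure_pmf.prob (N K) {S. rainbow_witness S T})"
      by (rule measure_pmf.finite_measure_subadditive_finite[OF finTT]) simp
    also have "\<dots> \<le> (\<Sum>T\<in>TT. e^4 * (\<Prod>v\<in>T. a (K v)))" by (intro sum_mono bnd)
    also have "\<dots> = e^4 * (\<Sum>T\<in>TT. \<Prod>v\<in>T. a (K v))" by (simp add: sum_distrib_left)
    finally show ?thesis using False by simp
  qed
  have Pbad: "measure_pmf.prob Q bad \<le> real n * measure_pmf.prob PP B"
  proof -
    have bU: "bad = (\<Union>v\<in>{..<n}. {K. K v \<in> B})" unfolding bad_def by auto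
    have "measure_pmf.prob Q bad \<le> (\<Sum>v\<in>{..<n}. measure_pmf.prob Q {K. K v \<in> B})"
      unfolding bU by (rule measure_pmf.finite_measure_subadditive_finite) auto
    also have "\<dots> = (\<Sum>v\<in>{..<n}. measure_pmf.prob PP B)"
    proof (intro sum.cong refl)
      fix v assume v: "v \<in> {..<n}"
      have "measure_pmf.prob Q {K. K v \<in> B} = measure_pmf.prob (map_pmf (\<lambda>f. f v) Q) B"
        by (simp add: vimage_def)
      also have "map_pmf (\<lambda>f. f v) Q = PP" unfolding Q_def using v by (subst Pi_pmf_component) auto
      finally show "measure_pmf.prob Q {K. K v \<in> B} = measure_pmf.prob PP B" .
    qed
    also have "\<dots> = real n * measure_pmf.prob PP B" by simp
    finally show ?thesis .
  qed
  have "measure_pmf.prob (RIG n mm PP) {S. has_rainbow_K4 n S}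
      = measure_pmf.expectation Q (\<lambda>K. measure_pmf.prob (N K) {S. has_rainbow_K4 n S})"
    unfolding RIG by (rule prob_bind_fin[OF finQ])
  also have "\<dots> \<le> measure_pmf.expectation Q (\<lambda>K. indicator bad K + e^4 * (\<Sum>T\<in>TT. \<Prod>v\<in>T. a (K v)))"
    by (rule integral_mono_AE[OF intQ intQ]) (auto intro!: AE_pmfI pw2)
  also have "\<dots> = measure_pmf.expectation Q (indicator bad) + measure_pmf.expectation Q (\<lambda>K. e^4 * (\<Sum>T\<in>TT. \<Prod>v\<in>T. a (K v)))"
    by (rule Bochner_Integration.integral_add[OF intQ intQ])
  also have "measure_pmf.expectation Q (\<lambda>K. e^4 * (\<Sum>T\<in>TT. \<Prod>v\<in>T. a (K v)))
      = e^4 * measure_pmf.expectation Q (\<lambda>K. \<Sum>T\<in>TT. \<Prod>v\<in>T. a (K v))"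
    by (rule integral_mult_right_zero)
  also have "measure_pmf.expectation Q (\<lambda>K. \<Sum>T\<in>TT. \<Prod>v\<in>T. a (K v))
      = (\<Sum>T\<in>TT. measure_pmf.expectation Q (\<lambda>K. \<Prod>v\<in>T. a (K v)))"
    by (rule Bochner_Integration.integral_sum[OF intQ])
  also have "\<dots> = (\<Sum>T\<in>TT. Ea ^ 4)" by (intro sum.cong refl ET)
  also have "measure_pmf.expectation Q (indicator bad) = measure_pmf.prob Q bad" by simp
  also have "measure_pmf.prob Q bad + e^4 * (\<Sum>T\<in>TT. Ea ^ 4)
      \<le> real n * measure_pmf.prob PP B + e^4 * (EY ^ 4 / fact 4)"
    using Pbad sumE e by (intro add_mono mult_left_mono) auto
  finally show "measure_pmf.prob (RIG n mm PP) {S. has_rainbow_K4 n S}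
           \<le> real n * measure_pmf.prob PP {k. Yval n mm k \<ge> e * sqrt (real n)} + e^4 * (EY ^ 4 / fact 4)"
    unfolding B_def .
qed

theorem mainTheorem16:
  fixes m :: "nat \<Rightarrow> nat" and P :: "nat \<Rightarrow> nat pmf"
  assumes m_pos: "\<And>n. n \<ge> 1 \<Longrightarrow> m n \<ge> 1"
    and P_supp: "\<And>n. n \<ge> 1 \<Longrightarrow> set_pmf (P n) \<subseteq> {0..m n}"
    and m_inf: "filterlim m at_top sequentially"
    and EY2_bdd: "(\<lambda>n. measure_pmf.expectation (P n) (\<lambda>k. (Yval n (m n) k)\<^sup>2)) \<in> O(\<lambda>_. 1)"
  shows "(\<forall>n\<ge>1. measure_pmf.expectation (RIG n (m n) (P n)) (\<lambda>S. real (num_rainbow_K4 n S))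
            \<le> (measure_pmf.expectation (P n) (\<lambda>k. (Yval n (m n) k)\<^sup>2)) ^ 4 / fact 4)
       \<and> (\<lambda>n. measure_pmf.expectation (RIG n (m n) (P n)) (\<lambda>S. real (num_rainbow_K4 n S)))
            \<in> O(\<lambda>_. 1)
       \<and> ((\<exists>\<epsilon> :: nat \<Rightarrow> real. (\<forall>n. \<epsilon> n > 0) \<and> \<epsilon> \<longlonglongrightarrow> 0 \<and>
              (\<lambda>n. real n * measure_pmf.prob (P n) {k. Yval n (m n) k \<ge> \<epsilon> n * sqrt (real n)})
                \<longlonglongrightarrow> 0)
          \<longrightarrow> (\<lambda>n. measure_pmf.prob (RIG n (m n) (P n)) {S. has_rainbow_K4 n S}) \<longlonglongrightarrow> 0)"
proof -
  define EY where "EY = (\<lambda>n. measure_pmf.expectation (P n) (\<lambda>k. (Yval n (m n) k)\<^sup>2))"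
  define ER where "ER = (\<lambda>n. measure_pmf.expectation (RIG n (m n) (P n)) (\<lambda>S. real (num_rainbow_K4 n S)))"
  have b1: "ER n \<le> EY n ^ 4 / fact 4" if "n \<ge> 1" for n
    unfolding ER_def EY_def by (rule bounds(1)[OF m_pos[OF that] P_supp[OF that]])
  have EYnn: "EY n \<ge> 0" for n unfolding EY_def by (intro Bochner_Integration.integral_nonneg_AE) auto
  have ERnn: "ER n \<ge> 0" for n unfolding ER_def by (intro Bochner_Integration.integral_nonneg_AE) auto
  from EY2_bdd obtain C where C: "C > 0" "eventually (\<lambda>n. norm (EY n) \<le> C * norm (1::real)) sequentially"
    unfolding EY_def by (elim landau_o.bigE) auto
  have evC: "eventually (\<lambda>n. EY n ^ 4 / fact 4 \<le> C ^ 4 / fact 4) sequentially"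
    using C(2)
  proof eventually_elim
    case (elim n)
    then have "EY n \<le> C" using EYnn[of n] by simp
    then have "EY n ^ 4 \<le> C ^ 4" using EYnn[of n] by (intro power_mono) auto
    then show ?case by (simp add: divide_right_mono)
  qed
  have ev1: "eventually (\<lambda>n. n \<ge> (1::nat)) sequentially" by (rule eventually_ge_at_top)
  have c2: "ER \<in> O(\<lambda>_. 1)"
  proof (rule bigoI[where c="C ^ 4 / fact 4"])
    show "eventually (\<lambda>n. norm (ER n) \<le> C ^ 4 / fact 4 * norm (1::real)) sequentially"
      using evC ev1
    proof eventually_elim
      case (elim n)
      then show ?case using b1[of n] ERnn[of n] by simp
    qed
  qed
  have c3: "(\<lambda>n. measure_pmf.prob (RIG n (m n) (P n)) {S. has_rainbow_K4 n S}) \<longlonglongrightarrow> 0"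
    if "\<exists>\<epsilon> :: nat \<Rightarrow> real. (\<forall>n. \<epsilon> n > 0) \<and> \<epsilon> \<longlonglongrightarrow> 0 \<and>
              (\<lambda>n. real n * measure_pmf.prob (P n) {k. Yval n (m n) k \<ge> \<epsilon> n * sqrt (real n)})
                \<longlonglongrightarrow> 0"
  proof -
    from that obtain \<epsilon> :: "nat \<Rightarrow> real" where e: "\<forall>n. \<epsilon> n > 0" "\<epsilon> \<longlonglongrightarrow> 0"
      and lim: "(\<lambda>n. real n * measure_pmf.prob (P n) {k. Yval n (m n) k \<ge> \<epsilon> n * sqrt (real n)}) \<longlonglongrightarrow> 0"
      by blast
    define h where "h = (\<lambda>n. real n * measure_pmf.prob (P n) {k. Yval n (m n) k \<ge> \<epsilon> n * sqrt (real n)}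
                          + \<epsilon> n ^ 4 * (C ^ 4 / fact 4))"
    have hlim: "h \<longlonglongrightarrow> 0"
    proof -
      have "(\<lambda>n. \<epsilon> n ^ 4 * (C ^ 4 / fact 4)) \<longlonglongrightarrow> 0 ^ 4 * (C ^ 4 / fact 4)"
        by (intro tendsto_intros e(2))
      then have "(\<lambda>n. \<epsilon> n ^ 4 * (C ^ 4 / fact 4)) \<longlonglongrightarrow> 0" by simp
      from tendsto_add[OF lim this] show ?thesis unfolding h_def by simp
    qed
    show ?thesis
    proof (rule real_tendsto_sandwich[OF _ _ tendsto_const hlim])
      show "eventually (\<lambda>n. 0 \<le> measure_pmf.prob (RIG n (m n) (P n)) {S. has_rainbow_K4 n S}) sequentially"
        by simp
      show "eventually (\<lambda>n. measure_pmf.prob (RIG n (m n) (P n)) {S. has_rainbow_K4 n S} \<le> h n) sequentially"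
        using evC ev1
      proof eventually_elim
        case (elim n)
        have "measure_pmf.prob (RIG n (m n) (P n)) {S. has_rainbow_K4 n S}
            \<le> real n * measure_pmf.prob (P n) {k. Yval n (m n) k \<ge> \<epsilon> n * sqrt (real n)} + \<epsilon> n ^ 4 * (EY n ^ 4 / fact 4)"
          unfolding EY_def using bounds(2)[OF m_pos[OF elim(2)] P_supp[OF elim(2)]] e(1) by blast
        also have "\<dots> \<le> h n" unfolding h_def using elim(1) e(1)
          by (intro add_left_mono mult_left_mono) auto
        finally show ?case .
      qed
    qed
  qed
  show ?thesis using b1 c2 c3 unfolding ER_def EY_def by blast
qed

end
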